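(* Let $\mathcal{X}=\{1,\dots,n\}$, let $\pi$ be a strictly positive probability distribution on $\mathcal{X}$ and let $P$ be a $\pi$-reversible transition matrix. For every $S\subset\mathcal{X}$ with $S\neq\emptyset,\mathcal{X}$ (and $S'=\mathcal{X}\setminus S$), $$g(S):=\frac{1}{\pi(S)\pi(S')}\sum_{x\in S,\,y\in S'}\pi(x)P(x,y)=f_1(S)-f_2(S)-f_3(S),$$ where $f_1(S)=\frac{1}{\pi(S)\pi(S')}-2$, $f_2(S)=\frac{1}{\pi(S)}\sum_{x,y\in S'}\pi(x)P(x,y)$, $f_3(S)=\frac{1}{\pi(S')}\sum_{x,y\in S}\pi(x)P(x,y)$; moreover each of $f_1,f_2,f_3$ is supermodular on $\{S\subseteq\mathcal{X}:0<\pi(S)<1\}$.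
   Context: $\pi$-reversible means $\pi(x)P(x,y)=\pi(y)P(y,x)$. A set function $f$ is submodular if $f(A\cap B)+f(A\cup B)\le f(A)+f(B)$ for all $A,B$ in its domain, and supermodular if $-f$ is submodular. *)

theory Defs
  imports Complex_Main
begin

definition state_space :: "nat \<Rightarrow> nat set" where
  "state_space n = {1..n}"

definition pos_prob_dist :: "nat \<Rightarrow> (nat \<Rightarrow> real) \<Rightarrow> bool" where
  "pos_prob_dist n \<pi> \<longleftrightarrow> (\<forall>x\<in>state_space n. \<pi> x > 0) \<and> (\<Sum>x\<in>state_space n. \<pi> x) = 1"

definition transition_matrix :: "nat \<Rightarrow> (nat \<Rightarrow> nat \<Rightarrow> real) \<Rightarrow> bool" where
  "transition_matrix n P \<longleftrightarrow>
     (\<forall>x\<in>state_space n. \<forall>y\<in>state_space n. P x y \<ge> 0) \<and>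
     (\<forall>x\<in>state_space n. (\<Sum>y\<in>state_space n. P x y) = 1)"

definition reversible :: "nat \<Rightarrow> (nat \<Rightarrow> real) \<Rightarrow> (nat \<Rightarrow> nat \<Rightarrow> real) \<Rightarrow> bool" where
  "reversible n \<pi> P \<longleftrightarrow> (\<forall>x\<in>state_space n. \<forall>y\<in>state_space n. \<pi> x * P x y = \<pi> y * P y x)"

definition pmeas :: "(nat \<Rightarrow> real) \<Rightarrow> nat set \<Rightarrow> real" where
  "pmeas \<pi> S = (\<Sum>x\<in>S. \<pi> x)"

definition flow :: "(nat \<Rightarrow> real) \<Rightarrow> (nat \<Rightarrow> nat \<Rightarrow> real) \<Rightarrow> nat set \<Rightarrow> nat set \<Rightarrow> real" where
  "flow \<pi> P A B = (\<Sum>x\<in>A. \<Sum>y\<in>B. \<pi> x * P x y)"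

definition g_fun :: "nat \<Rightarrow> (nat \<Rightarrow> real) \<Rightarrow> (nat \<Rightarrow> nat \<Rightarrow> real) \<Rightarrow> nat set \<Rightarrow> real" where
  "g_fun n \<pi> P S = flow \<pi> P S (state_space n - S) /
      (pmeas \<pi> S * pmeas \<pi> (state_space n - S))"

definition f1 :: "nat \<Rightarrow> (nat \<Rightarrow> real) \<Rightarrow> nat set \<Rightarrow> real" where
  "f1 n \<pi> S = 1 / (pmeas \<pi> S * pmeas \<pi> (state_space n - S)) - 2"

definition f2 :: "nat \<Rightarrow> (nat \<Rightarrow> real) \<Rightarrow> (nat \<Rightarrow> nat \<Rightarrow> real) \<Rightarrow> nat set \<Rightarrow> real" where
  "f2 n \<pi> P S = flow \<pi> P (state_space n - S) (state_space n - S) / pmeas \<pi> S"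

definition f3 :: "nat \<Rightarrow> (nat \<Rightarrow> real) \<Rightarrow> (nat \<Rightarrow> nat \<Rightarrow> real) \<Rightarrow> nat set \<Rightarrow> real" where
  "f3 n \<pi> P S = flow \<pi> P S S / pmeas \<pi> (state_space n - S)"

definition supermodular_on :: "'a set set \<Rightarrow> ('a set \<Rightarrow> real) \<Rightarrow> bool" where
  "supermodular_on D f \<longleftrightarrow>
     (\<forall>A\<in>D. \<forall>B\<in>D. A \<inter> B \<in> D \<longrightarrow> A \<union> B \<in> D \<longrightarrow> f A + f B \<le> f (A \<inter> B) + f (A \<union> B))"

definition good_sets :: "nat \<Rightarrow> (nat \<Rightarrow> real) \<Rightarrow> nat set set" where
  "good_sets n \<pi> = {S. S \<subseteq> state_space n \<and> 0 < pmeas \<pi> S \<and> pmeas \<pi> S < 1}"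

end

theory Submission
  imports Defs
begin

lemma recip_ineq:
  fixes x y a b :: real
  assumes "0 < x" "x \<le> a" "x \<le> b" "a + b = x + y"
  shows "1/a + 1/b \<le> 1/x + 1/y"
proof -
  have ya: "0 < a" "0 < b" "0 < y" using assms by linarith+
  have "x * y \<le> a * b"
  proof -
    have "0 \<le> (a - x) * (b - x)" using assms by simp
    moreover have "x * y = a * x + b * x - x * x"
    proof -
      have "x * (x + y) = x * (a + b)" using assms(4) by simp
      thus ?thesis by (simp add: algebra_simps)
    qed
    ultimately show ?thesis by (simp add: algebra_simps)
  qed
  hence "(a + b) / (a * b) \<le> (x + y) / (x * y)"
    using assms ya by (simp add: divide_simps)
  thus ?thesis using ya assms by (simp add: field_simps)
qed

lemma key_ineq:
  fixes x y a b Qa Qb Qi Qu :: real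
  assumes "0 < x" "x \<le> a" "x \<le> b" "a + b = x + y"
    and "0 \<le> Qu" "Qu \<le> Qa" "Qu \<le> Qb" "Qa + Qb \<le> Qi + Qu"
  shows "Qa/a + Qb/b \<le> Qu/y + Qi/x"
proof -
  have ya: "0 < a" "0 < b" "0 < y" using assms by linarith+
  define s where "s = Qa - Qu"
  define t where "t = Qb - Qu"
  have st: "0 \<le> s" "0 \<le> t" using assms s_def t_def by auto
  have "Qa/a + Qb/b = Qu * (1/a + 1/b) + s/a + t/b"
    using ya by (simp add: s_def t_def field_simps)
  also have "\<dots> \<le> Qu * (1/x + 1/y) + s/x + t/x"
  proof -
    have "Qu * (1/a + 1/b) \<le> Qu * (1/x + 1/y)"
      using mult_left_mono[OF recip_ineq[OF assms(1-4)] assms(5)] .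
    moreover have "s/a \<le> s/x" using st assms ya by (simp add: divide_left_mono)
    moreover have "t/b \<le> t/x" using st assms ya by (simp add: divide_left_mono)
    ultimately show ?thesis by linarith
  qed
  also have "\<dots> = Qu/y + (Qu + s + t)/x" by (simp add: add_divide_distrib distrib_left)
  also have "\<dots> \<le> Qu/y + Qi/x"
    using assms s_def t_def by (simp add: divide_right_mono)
  finally show ?thesis .
qed

lemma alg_id: fixes a F :: real assumes "0<a" "0 < 1-a" shows
 "F / (a * (1 - a)) = 1 / (a * (1 - a)) - 2 - ((1 - a) - F) / a - (a - F) / (1 - a)"
proof -
  have "a \<noteq> 0" "1 - a \<noteq> 0" using assms by auto
  have "1 / (a * (1 - a)) - 2 - ((1 - a) - F) / a - (a - F) / (1 - a)
      = (1 - 2 * (a * (1 - a)) - ((1 - a) - F) * (1 - a) - (a - F) * a) / (a * (1 - a))"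
    using assms by (simp add: diff_divide_distrib add_divide_distrib)
  also have "1 - 2 * (a * (1 - a)) - ((1 - a) - F) * (1 - a) - (a - F) * a = F"
    by (simp add: algebra_simps power2_eq_square)
  finally show ?thesis by simp
qed

definition qq :: "(nat \<Rightarrow> real) \<Rightarrow> (nat \<Rightarrow> nat \<Rightarrow> real) \<Rightarrow> nat set \<Rightarrow> real" where
  "qq \<pi> P T = flow \<pi> P T T"

lemma qq_ind:
  assumes "finite X" "T \<subseteq> X"
  shows "qq \<pi> P T = (\<Sum>x\<in>X. \<Sum>y\<in>X. if x \<in> T \<and> y \<in> T then \<pi> x * P x y else 0)"
proof -
  have "(\<Sum>x\<in>X. \<Sum>y\<in>X. if x \<in> T \<and> y \<in> T then \<pi> x * P x y else 0)
      = (\<Sum>x\<in>X. if x \<in> T then (\<Sum>y\<in>X. if y \<in> T then \<pi> x * P x y else 0) else 0)"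
    by (rule sum.cong) auto
  also have "\<dots> = (\<Sum>x\<in>T. (\<Sum>y\<in>X. if y \<in> T then \<pi> x * P x y else 0))"
    using assms by (simp add: sum.If_cases Int_absorb1 inf.absorb2)
  also have "\<dots> = (\<Sum>x\<in>T. \<Sum>y\<in>T. \<pi> x * P x y)"
    using assms by (simp add: sum.If_cases inf.absorb2)
  finally show ?thesis by (simp add: qq_def flow_def)
qed

lemma qq_mono_super:
  assumes "finite X" "A \<subseteq> X" "B \<subseteq> X"
    and w: "\<And>x y. x \<in> X \<Longrightarrow> y \<in> X \<Longrightarrow> 0 \<le> \<pi> x * P x y"
  shows "qq \<pi> P (A \<inter> B) \<le> qq \<pi> P A" "0 \<le> qq \<pi> P (A \<inter> B)"
    and "qq \<pi> P A + qq \<pi> P B \<le> qq \<pi> P (A \<union> B) + qq \<pi> P (A \<inter> B)"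
proof -
  have AB: "A \<inter> B \<subseteq> X" "A \<union> B \<subseteq> X" using assms by auto
  note e = qq_ind[OF assms(1) AB(1)] qq_ind[OF assms(1) AB(2)] qq_ind[OF assms(1) assms(2)]
     qq_ind[OF assms(1) assms(3)]
  show "qq \<pi> P (A \<inter> B) \<le> qq \<pi> P A"
    unfolding e
    using assms by (intro sum_mono) (auto intro!: sum_mono simp: w)
  show "0 \<le> qq \<pi> P (A \<inter> B)"
    unfolding e
    using assms by (intro sum_nonneg) (auto intro!: sum_nonneg simp: w)
  show "qq \<pi> P A + qq \<pi> P B \<le> qq \<pi> P (A \<union> B) + qq \<pi> P (A \<inter> B)"
    unfolding e
    using assms by (simp only: sum.distrib[symmetric]) (auto intro!: sum_mono simp: w)
qed


theorem proposition4p13: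
  fixes n :: nat and \<pi> :: "nat \<Rightarrow> real" and P :: "nat \<Rightarrow> nat \<Rightarrow> real"
  assumes "pos_prob_dist n \<pi>"
    and "transition_matrix n P"
    and "reversible n \<pi> P"
  shows "(\<forall>S. S \<subseteq> state_space n \<and> S \<noteq> {} \<and> S \<noteq> state_space n \<longrightarrow>
            g_fun n \<pi> P S = f1 n \<pi> S - f2 n \<pi> P S - f3 n \<pi> P S)
         \<and> supermodular_on (good_sets n \<pi>) (f1 n \<pi>)
         \<and> supermodular_on (good_sets n \<pi>) (f2 n \<pi> P)
         \<and> supermodular_on (good_sets n \<pi>) (f3 n \<pi> P)"
proof -
  define X where "X = state_space n"
  have finX: "finite X" by (simp add: X_def state_space_def)
  have pipos: "\<And>x. x \<in> X \<Longrightarrow> 0 < \<pi> x" and pisum: "pmeas \<pi> X = 1"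
    using assms(1) by (auto simp: pos_prob_dist_def X_def pmeas_def)
  have Pnn: "\<And>x y. x \<in> X \<Longrightarrow> y \<in> X \<Longrightarrow> 0 \<le> P x y"
    and Prow: "\<And>x. x \<in> X \<Longrightarrow> (\<Sum>y\<in>X. P x y) = 1"
    using assms(2) by (auto simp: transition_matrix_def X_def)
  have rev: "\<And>x y. x \<in> X \<Longrightarrow> y \<in> X \<Longrightarrow> \<pi> x * P x y = \<pi> y * P y x"
    using assms(3) by (auto simp: reversible_def X_def)
  have w: "\<And>x y. x \<in> X \<Longrightarrow> y \<in> X \<Longrightarrow> 0 \<le> \<pi> x * P x y"
    using pipos Pnn by (simp add: less_imp_le)
  have compl: "\<And>S. S \<subseteq> X \<Longrightarrow> pmeas \<pi> (X - S) = 1 - pmeas \<pi> S"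
    using finX pisum by (simp add: pmeas_def sum_diff)
  have pmono: "\<And>S T. S \<subseteq> T \<Longrightarrow> T \<subseteq> X \<Longrightarrow> pmeas \<pi> S \<le> pmeas \<pi> T"
    unfolding pmeas_def using finX pipos
    by (intro sum_mono2) (auto intro: finite_subset less_imp_le)
  have pUI: "\<And>A B. A \<subseteq> X \<Longrightarrow> B \<subseteq> X \<Longrightarrow>
      pmeas \<pi> A + pmeas \<pi> B = pmeas \<pi> (A \<inter> B) + pmeas \<pi> (A \<union> B)"
    unfolding pmeas_def using finX
    by (metis add.commute finite_subset sum.union_inter)
  have ppos: "\<And>S. S \<subseteq> X \<Longrightarrow> S \<noteq> {} \<Longrightarrow> 0 < pmeas \<pi> S"
    unfolding pmeas_def using finX pipos
    by (intro sum_pos) (auto intro: finite_subset)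
  have part1: "\<forall>S. S \<subseteq> state_space n \<and> S \<noteq> {} \<and> S \<noteq> state_space n \<longrightarrow>
            g_fun n \<pi> P S = f1 n \<pi> S - f2 n \<pi> P S - f3 n \<pi> P S"
  proof (intro allI impI)
    fix S assume "S \<subseteq> state_space n \<and> S \<noteq> {} \<and> S \<noteq> state_space n"
    hence S: "S \<subseteq> X" "S \<noteq> {}" "X - S \<noteq> {}" unfolding X_def by auto
    define a where "a = pmeas \<pi> S"
    define F where "F = flow \<pi> P S (X - S)"
    have a0: "0 < a" using ppos S a_def by auto
    have b: "pmeas \<pi> (X - S) = 1 - a" using compl S a_def by simp
    have b0: "0 < 1 - a" using ppos[of "X - S"] S b by auto
    have rowsum: "\<And>T. T \<subseteq> X \<Longrightarrow> flow \<pi> P T T + flow \<pi> P T (X - T) = pmeas \<pi> T"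
    proof -
      fix T assume T: "T \<subseteq> X"
      have "flow \<pi> P T T + flow \<pi> P T (X - T) = (\<Sum>x\<in>T. \<Sum>y\<in>X. \<pi> x * P x y)"
        unfolding flow_def sum.distrib[symmetric]
        using T finX by (intro sum.cong refl) (metis Diff_partition sum.union_disjoint
              Diff_disjoint finite_Diff finite_subset)
      also have "\<dots> = (\<Sum>x\<in>T. \<pi> x)"
        using T by (intro sum.cong refl) (auto simp: sum_distrib_left[symmetric] Prow)
      finally show "flow \<pi> P T T + flow \<pi> P T (X - T) = pmeas \<pi> T" by (simp add: pmeas_def)
    qed
    have sw: "flow \<pi> P (X - S) S = F"
      unfolding F_def flow_def
      by (subst sum.swap) (use S in \<open>auto intro!: sum.cong simp: rev\<close>)
    have XXS: "X - (X - S) = S" using S by auto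
    have e1: "flow \<pi> P S S = a - F" using rowsum[OF S(1)] F_def a_def by simp
    have e2: "flow \<pi> P (X - S) (X - S) = (1 - a) - F"
      using rowsum[of "X - S"] sw b XXS by simp
    have "g_fun n \<pi> P S = F / (a * (1 - a))"
      by (simp add: g_fun_def F_def a_def b X_def[symmetric])
    also have "\<dots> = 1 / (a * (1 - a)) - 2 - ((1 - a) - F) / a - (a - F) / (1 - a)"
      using alg_id a0 b0 by blast
    also have "\<dots> = f1 n \<pi> S - f2 n \<pi> P S - f3 n \<pi> P S"
      by (simp add: f1_def f2_def f3_def X_def[symmetric] a_def[symmetric] b e1 e2)
    finally show "g_fun n \<pi> P S = f1 n \<pi> S - f2 n \<pi> P S - f3 n \<pi> P S" .
  qed
  have GS: "\<And>S. S \<in> good_sets n \<pi> \<longleftrightarrow> S \<subseteq> X \<and> 0 < pmeas \<pi> S \<and> pmeas \<pi> S < 1"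
    by (simp add: good_sets_def X_def)
  have part2: "supermodular_on (good_sets n \<pi>) (f1 n \<pi>)"
    unfolding supermodular_on_def
  proof (intro ballI impI)
    fix A B assume A: "A \<in> good_sets n \<pi>" and B: "B \<in> good_sets n \<pi>"
      and I: "A \<inter> B \<in> good_sets n \<pi>" and U: "A \<union> B \<in> good_sets n \<pi>"
    note A = A[unfolded GS] and B = B[unfolded GS] and I = I[unfolded GS] and U = U[unfolded GS]
    have f1e: "\<And>S. S \<subseteq> X \<Longrightarrow> 0 < pmeas \<pi> S \<Longrightarrow> pmeas \<pi> S < 1 \<Longrightarrow>
        f1 n \<pi> S = 1 / pmeas \<pi> S + 1 / (1 - pmeas \<pi> S) - 2"
      by (simp add: f1_def X_def[symmetric] compl field_simps)
    have s: "pmeas \<pi> A + pmeas \<pi> B = pmeas \<pi> (A \<inter> B) + pmeas \<pi> (A \<union> B)"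
      using pUI A B by auto
    have m: "pmeas \<pi> (A \<inter> B) \<le> pmeas \<pi> A" "pmeas \<pi> (A \<inter> B) \<le> pmeas \<pi> B"
      "pmeas \<pi> A \<le> pmeas \<pi> (A \<union> B)" "pmeas \<pi> B \<le> pmeas \<pi> (A \<union> B)"
      using pmono A B U by auto
    have r1: "1 / pmeas \<pi> A + 1 / pmeas \<pi> B \<le> 1 / pmeas \<pi> (A \<inter> B) + 1 / pmeas \<pi> (A \<union> B)"
      using recip_ineq[OF _ m(1,2) s] I by auto
    have r2: "1 / (1 - pmeas \<pi> A) + 1 / (1 - pmeas \<pi> B) \<le>
        1 / (1 - pmeas \<pi> (A \<union> B)) + 1 / (1 - pmeas \<pi> (A \<inter> B))"
      using recip_ineq[of "1 - pmeas \<pi> (A \<union> B)" "1 - pmeas \<pi> A" "1 - pmeas \<pi> B"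
          "1 - pmeas \<pi> (A \<inter> B)"] U m s by auto
    show "f1 n \<pi> A + f1 n \<pi> B \<le> f1 n \<pi> (A \<inter> B) + f1 n \<pi> (A \<union> B)"
      using f1e A B I U r1 r2 by auto
  qed
  have part3: "supermodular_on (good_sets n \<pi>) (f2 n \<pi> P)"
    unfolding supermodular_on_def
  proof (intro ballI impI)
    fix A B assume A: "A \<in> good_sets n \<pi>" and B: "B \<in> good_sets n \<pi>"
      and I: "A \<inter> B \<in> good_sets n \<pi>" and U: "A \<union> B \<in> good_sets n \<pi>"
    note A = A[unfolded GS] and B = B[unfolded GS] and I = I[unfolded GS] and U = U[unfolded GS]
    have f2e: "\<And>S. f2 n \<pi> P S = qq \<pi> P (X - S) / pmeas \<pi> S"
      by (simp add: f2_def qq_def X_def)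
    have s: "pmeas \<pi> A + pmeas \<pi> B = pmeas \<pi> (A \<inter> B) + pmeas \<pi> (A \<union> B)"
      using pUI A B by auto
    have m: "pmeas \<pi> (A \<inter> B) \<le> pmeas \<pi> A" "pmeas \<pi> (A \<inter> B) \<le> pmeas \<pi> B"
      using pmono A B U by auto
    have sA: "X - A \<subseteq> X" and sB: "X - B \<subseteq> X" by auto
    have eU: "X - (A \<union> B) = (X - A) \<inter> (X - B)" and eI: "X - (A \<inter> B) = (X - A) \<union> (X - B)"
      by auto
    have q: "qq \<pi> P ((X - A) \<inter> (X - B)) \<le> qq \<pi> P (X - A)"
      "0 \<le> qq \<pi> P ((X - A) \<inter> (X - B))"
      "qq \<pi> P (X - A) + qq \<pi> P (X - B) \<le> qq \<pi> P ((X - A) \<union> (X - B)) + qq \<pi> P ((X - A) \<inter> (X - B))"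
      using qq_mono_super[OF finX sA sB w] by auto
    have q2: "qq \<pi> P ((X - A) \<inter> (X - B)) \<le> qq \<pi> P (X - B)"
      using qq_mono_super(1)[OF finX sB sA w] by (simp add: Int_commute)
    have "qq \<pi> P (X - A) / pmeas \<pi> A + qq \<pi> P (X - B) / pmeas \<pi> B \<le>
        qq \<pi> P ((X - A) \<inter> (X - B)) / pmeas \<pi> (A \<union> B) +
        qq \<pi> P ((X - A) \<union> (X - B)) / pmeas \<pi> (A \<inter> B)"
      using key_ineq[OF _ m s q(2,1) q2 q(3)] I by auto
    thus "f2 n \<pi> P A + f2 n \<pi> P B \<le> f2 n \<pi> P (A \<inter> B) + f2 n \<pi> P (A \<union> B)"
      unfolding f2e eU eI by linarith
  qed
  have part4: "supermodular_on (good_sets n \<pi>) (f3 n \<pi> P)"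
    unfolding supermodular_on_def
  proof (intro ballI impI)
    fix A B assume A: "A \<in> good_sets n \<pi>" and B: "B \<in> good_sets n \<pi>"
      and I: "A \<inter> B \<in> good_sets n \<pi>" and U: "A \<union> B \<in> good_sets n \<pi>"
    note A = A[unfolded GS] and B = B[unfolded GS] and I = I[unfolded GS] and U = U[unfolded GS]
    have f3e: "\<And>S. S \<subseteq> X \<Longrightarrow> f3 n \<pi> P S = qq \<pi> P S / (1 - pmeas \<pi> S)"
      by (simp add: f3_def qq_def X_def[symmetric] compl)
    have s: "pmeas \<pi> A + pmeas \<pi> B = pmeas \<pi> (A \<inter> B) + pmeas \<pi> (A \<union> B)"
      using pUI A B by auto
    have m: "pmeas \<pi> A \<le> pmeas \<pi> (A \<union> B)" "pmeas \<pi> B \<le> pmeas \<pi> (A \<union> B)"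
      using pmono A B U by auto
    have q: "qq \<pi> P (A \<inter> B) \<le> qq \<pi> P A" "0 \<le> qq \<pi> P (A \<inter> B)"
      "qq \<pi> P A + qq \<pi> P B \<le> qq \<pi> P (A \<union> B) + qq \<pi> P (A \<inter> B)"
      using qq_mono_super[OF finX _ _ w] A B by auto
    have q2: "qq \<pi> P (A \<inter> B) \<le> qq \<pi> P B"
      using qq_mono_super(1)[OF finX _ _ w, of B A] A B by (simp add: Int_commute)
    have "qq \<pi> P A / (1 - pmeas \<pi> A) + qq \<pi> P B / (1 - pmeas \<pi> B) \<le>
        qq \<pi> P (A \<inter> B) / (1 - pmeas \<pi> (A \<inter> B)) + qq \<pi> P (A \<union> B) / (1 - pmeas \<pi> (A \<union> B))"
      using key_ineq[of "1 - pmeas \<pi> (A \<union> B)" "1 - pmeas \<pi> A" "1 - pmeas \<pi> B"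
          "1 - pmeas \<pi> (A \<inter> B)", OF _ _ _ _ q(2,1) q2 q(3)] U m s by auto
    thus "f3 n \<pi> P A + f3 n \<pi> P B \<le> f3 n \<pi> P (A \<inter> B) + f3 n \<pi> P (A \<union> B)"
      using f3e A B I U by auto
  qed
  show ?thesis using part1 part2 part3 part4 by blast
qed

end
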